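(* Let $M$ be a countable transitive $\aleph_0$-categorical structure with no algebraicity admitting weak elimination of imaginaries, $G=\operatorname{Aut}(M)$, and let $\mu$ be a $G$-invariant, ergodic Borel probability measure on $\mathrm{LO}(M)$ which respects every $2$-type. Then $\mu$ is a Dirac measure.
   Context: $\mathrm{LO}(M)$ is the compact space of linear orders on $M$ with $a<_{g\cdot x}b\iff g^{-1}a<_xg^{-1}b$. A $2$-type is a $G$-orbit on $M^2$, $\mathrm{tp}(ab)$ the orbit of $(a,b)$. A measure $\mu$ on $\mathrm{LO}(M)$ respects a $2$-type $\tau$ if for all $a,b,c\in M$ with $\mathrm{tp}(ac)=\mathrm{tp}(bc)=\tau$, for $\mu$-a.e. $x$, $c$ is not strictly between $a$ and $b$ in $<_x$. No algebraicity: for finite $A\subseteq M$, all orbits of the pointwise stabilizer $G_A$ on $M\setminus A$ are infinite. Weak elimination of imaginaries: every proper open subgroup $V<G$ contains some $G_{\bar a}$ ($\bar a$ finite tuple) with finite index. *)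

theory Defs
  imports "HOL-Probability.Probability"
begin

section \<open>Permutation groups on a countable set M (= UNIV :: 'a set)\<close>

definition perm_group :: "('a \<Rightarrow> 'a) set \<Rightarrow> bool" where
  "perm_group G \<longleftrightarrow> (\<forall>g\<in>G. bij g) \<and> id \<in> G \<and>
     (\<forall>g\<in>G. \<forall>h\<in>G. g \<circ> h \<in> G) \<and> (\<forall>g\<in>G. inv g \<in> G)"

text \<open>Closed in Sym(M) for the pointwise convergence topology; these are exactly
  the automorphism groups of structures with universe M.\<close>
definition closed_perm_group :: "('a \<Rightarrow> 'a) set \<Rightarrow> bool" where
  "closed_perm_group G \<longleftrightarrow> perm_group G \<and>
     (\<forall>f. bij f \<longrightarrow> (\<forall>A. finite A \<longrightarrow> (\<exists>g\<in>G. \<forall>a\<in>A. g a = f a)) \<longrightarrow> f \<in> G)"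

definition pstab :: "('a \<Rightarrow> 'a) set \<Rightarrow> 'a set \<Rightarrow> ('a \<Rightarrow> 'a) set" where
  "pstab G A = {g\<in>G. \<forall>a\<in>A. g a = a}"

definition tuple_orbit :: "('a \<Rightarrow> 'a) set \<Rightarrow> 'a list \<Rightarrow> 'a list set" where
  "tuple_orbit G xs = {map g xs | g. g \<in> G}"

text \<open>Oligomorphic: finitely many orbits on n-tuples for every n
  (by Ryll-Nardzewski, equivalent to aleph_0-categoricity of the structure).\<close>
definition oligomorphic :: "('a \<Rightarrow> 'a) set \<Rightarrow> bool" where
  "oligomorphic G \<longleftrightarrow> (\<forall>n. finite {tuple_orbit G xs | xs. length xs = n})"

definition transitive_group :: "('a \<Rightarrow> 'a) set \<Rightarrow> bool" where
  "transitive_group G \<longleftrightarrow> (\<forall>a b. \<exists>g\<in>G. g a = b)"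

definition no_algebraicity :: "('a \<Rightarrow> 'a) set \<Rightarrow> bool" where
  "no_algebraicity G \<longleftrightarrow>
     (\<forall>A a. finite A \<longrightarrow> a \<notin> A \<longrightarrow> infinite {g a | g. g \<in> pstab G A})"

definition subgroup_of :: "('a \<Rightarrow> 'a) set \<Rightarrow> ('a \<Rightarrow> 'a) set \<Rightarrow> bool" where
  "subgroup_of V G \<longleftrightarrow> V \<subseteq> G \<and> id \<in> V \<and>
     (\<forall>g\<in>V. \<forall>h\<in>V. g \<circ> h \<in> V) \<and> (\<forall>g\<in>V. inv g \<in> V)"

text \<open>A subgroup is open in the pointwise convergence topology iff it contains
  some pointwise stabilizer of a finite set.\<close>
definition open_subgroup :: "('a \<Rightarrow> 'a) set \<Rightarrow> ('a \<Rightarrow> 'a) set \<Rightarrow> bool" where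
  "open_subgroup V G \<longleftrightarrow> subgroup_of V G \<and> (\<exists>A. finite A \<and> pstab G A \<subseteq> V)"

definition left_cosets :: "('a \<Rightarrow> 'a) set \<Rightarrow> ('a \<Rightarrow> 'a) set \<Rightarrow> ('a \<Rightarrow> 'a) set set" where
  "left_cosets V H = {(\<lambda>h. g \<circ> h) ` H | g. g \<in> V}"

text \<open>Weak elimination of imaginaries: every proper open subgroup V contains
  G_{a} (a a finite tuple, i.e. G_A for the finite set A of its entries)
  as a subgroup of finite index.\<close>
definition weak_elim_imag :: "('a \<Rightarrow> 'a) set \<Rightarrow> bool" where
  "weak_elim_imag G \<longleftrightarrow>
     (\<forall>V. open_subgroup V G \<longrightarrow> V \<noteq> G \<longrightarrow>
        (\<exists>A. finite A \<and> pstab G A \<subseteq> V \<and> finite (left_cosets V (pstab G A))))"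

definition is_LO :: "('a \<times> 'a) set \<Rightarrow> bool" where
  "is_LO x \<longleftrightarrow> irrefl x \<and> trans x \<and> (\<forall>a b. a \<noteq> b \<longrightarrow> (a, b) \<in> x \<or> (b, a) \<in> x)"

definition LO :: "('a \<times> 'a) set set" where
  "LO = {x. is_LO x}"

text \<open>Borel sigma-algebra of the compact space LO(M) (subspace of 2^(M x M));
  for countable M it is generated by the clopen sets {x. a <_x b}.\<close>
definition LO_space :: "('a \<times> 'a) set measure" where
  "LO_space = sigma LO {{x\<in>LO. (a, b) \<in> x} | a b. True}"

definition act :: "('a \<Rightarrow> 'a) \<Rightarrow> ('a \<times> 'a) set \<Rightarrow> ('a \<times> 'a) set" where
  "act g x = {(a, b). (inv g a, inv g b) \<in> x}"

definition invariant_measure :: "('a \<Rightarrow> 'a) set \<Rightarrow> ('a \<times> 'a) set measure \<Rightarrow> bool" where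
  "invariant_measure G \<mu> \<longleftrightarrow>
     (\<forall>g\<in>G. \<forall>B\<in>sets \<mu>. act g ` B \<in> sets \<mu> \<and> emeasure \<mu> (act g ` B) = emeasure \<mu> B)"

definition ergodic_measure :: "('a \<Rightarrow> 'a) set \<Rightarrow> ('a \<times> 'a) set measure \<Rightarrow> bool" where
  "ergodic_measure G \<mu> \<longleftrightarrow>
     (\<forall>B\<in>sets \<mu>. (\<forall>g\<in>G. act g ` B = B) \<longrightarrow> emeasure \<mu> B = 0 \<or> emeasure \<mu> B = 1)"

definition same_2type :: "('a \<Rightarrow> 'a) set \<Rightarrow> 'a \<times> 'a \<Rightarrow> 'a \<times> 'a \<Rightarrow> bool" where
  "same_2type G p q \<longleftrightarrow> (\<exists>g\<in>G. g (fst p) = fst q \<and> g (snd p) = snd q)"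

definition strictly_between :: "('a \<times> 'a) set \<Rightarrow> 'a \<Rightarrow> 'a \<Rightarrow> 'a \<Rightarrow> bool" where
  "strictly_between x a c b \<longleftrightarrow> ((a, c) \<in> x \<and> (c, b) \<in> x) \<or> ((b, c) \<in> x \<and> (c, a) \<in> x)"

definition respects_2type ::
  "('a \<Rightarrow> 'a) set \<Rightarrow> ('a \<times> 'a) set measure \<Rightarrow> ('a \<times> 'a) set \<Rightarrow> bool" where
  "respects_2type G \<mu> \<tau> \<longleftrightarrow>
     (\<forall>a b c. (a, c) \<in> \<tau> \<longrightarrow> (b, c) \<in> \<tau> \<longrightarrow> (AE x in \<mu>. \<not> strictly_between x a c b))"

definition two_types :: "('a \<Rightarrow> 'a) set \<Rightarrow> ('a \<times> 'a) set set" where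
  "two_types G = {{q. same_2type G p q} | p. True}"

end

theory Submission imports Defs begin

definition tau :: "('a \<Rightarrow> 'a) set \<Rightarrow> 'a \<times> 'a \<Rightarrow> ('a \<times> 'a) set" where
  "tau G p = {q. same_2type G p q}"

definition Rel :: "('a \<Rightarrow> 'a) set \<Rightarrow> 'a \<times> 'a \<Rightarrow> ('a \<times> 'a) set" where
  "Rel G p = {(u,v). \<exists>c. (c,u) \<in> tau G p \<and> (c,v) \<in> tau G p}"

lemma tau_G:
  assumes "perm_group G" "g \<in> G" "(c,d) \<in> tau G p"
  shows "(g c, g d) \<in> tau G p"
proof -
  obtain h where "h \<in> G" "h (fst p) = c" "h (snd p) = d"
    using assms(3) by (auto simp: tau_def same_2type_def)
  moreover have "g \<circ> h \<in> G" using assms(1,2) \<open>h \<in> G\<close> by (auto simp: perm_group_def)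
  ultimately show ?thesis unfolding tau_def same_2type_def by (auto intro!: bexI[of _ "g \<circ> h"])
qed

lemma tau_neq:
  assumes "perm_group G" "fst p \<noteq> snd p" "(c,d) \<in> tau G p"
  shows "c \<noteq> d"
proof -
  obtain h where "h \<in> G" "h (fst p) = c" "h (snd p) = d"
    using assms(3) by (auto simp: tau_def same_2type_def)
  moreover have "bij h" using assms(1) \<open>h \<in> G\<close> by (auto simp: perm_group_def)
  ultimately show ?thesis using assms(2) by (metis bij_pointE)
qed

lemma tau_self: "perm_group G \<Longrightarrow> p \<in> tau G p"
  unfolding tau_def same_2type_def perm_group_def by (auto intro!: bexI[of _ id])

lemma Rel_G:
  assumes "perm_group G" "g \<in> G" "(u,v) \<in> (Rel G p)\<^sup>*"
  shows "(g u, g v) \<in> (Rel G p)\<^sup>*"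
  using assms(3)
proof (induction rule: rtrancl_induct)
  case base then show ?case by simp
next
  case (step y z)
  then obtain c where "(c,y) \<in> tau G p" "(c,z) \<in> tau G p" by (auto simp: Rel_def)
  then have "(g c, g y) \<in> tau G p" "(g c, g z) \<in> tau G p" using tau_G[OF assms(1,2)] by auto
  then have "(g y, g z) \<in> Rel G p" by (auto simp: Rel_def)
  with step show ?case by (meson rtrancl.simps)
qed

lemma Rel_sym: "(u,v) \<in> (Rel G p)\<^sup>* \<Longrightarrow> (v,u) \<in> (Rel G p)\<^sup>*"
proof -
  have "(Rel G p)\<inverse> = Rel G p" by (auto simp: Rel_def)
  moreover assume "(u,v) \<in> (Rel G p)\<^sup>*"
  then have "(v,u) \<in> ((Rel G p)\<inverse>)\<^sup>*" by (rule rtrancl_converseI)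
  ultimately show "(v,u) \<in> (Rel G p)\<^sup>*" by simp
qed

lemma succ_infinite:
  assumes "perm_group G" "no_algebraicity G" "fst p \<noteq> snd p" "(c,d0) \<in> tau G p"
  shows "infinite {d. (c,d) \<in> tau G p}"
proof -
  have "c \<noteq> d0" using tau_neq[OF assms(1,3,4)] .
  then have "d0 \<notin> {c}" by simp
  then have inf: "infinite {g d0 | g. g \<in> pstab G {c}}"
    using assms(2) unfolding no_algebraicity_def by blast
  have "{g d0 | g. g \<in> pstab G {c}} \<subseteq> {d. (c,d) \<in> tau G p}"
  proof
    fix y assume "y \<in> {g d0 | g. g \<in> pstab G {c}}"
    then obtain g where "g \<in> G" "g c = c" "y = g d0" by (auto simp: pstab_def)
    then show "y \<in> {d. (c,d) \<in> tau G p}" using tau_G[OF assms(1) \<open>g \<in> G\<close> assms(4)] by auto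
  qed
  then show ?thesis using inf finite_subset by blast
qed

lemma universal:
  assumes pg: "perm_group G" and tr: "transitive_group G" and na: "no_algebraicity G"
    and wei: "weak_elim_imag G" and np: "fst p \<noteq> snd p"
  shows "(b0, w) \<in> (Rel G p)\<^sup>*"
proof -
  define C where "C = (Rel G p)\<^sup>* `` {b0}"
  define V where "V = {g\<in>G. g ` C = C}"
  have b0C: "b0 \<in> C" by (simp add: C_def)
  have bijG: "\<And>g. g \<in> G \<Longrightarrow> bij g" and invG: "\<And>g. g \<in> G \<Longrightarrow> inv g \<in> G"
    and compG: "\<And>g h. g \<in> G \<Longrightarrow> h \<in> G \<Longrightarrow> g \<circ> h \<in> G" and idG: "id \<in> G"
    using pg by (auto simp: perm_group_def)
  have inV: "h \<in> V" if "h \<in> G" "h b0 \<in> C" for h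
  proof -
    have "h ` C \<subseteq> C"
    proof
      fix y assume "y \<in> h ` C"
      then obtain v where "v \<in> C" "y = h v" by auto
      then have "(h b0, h v) \<in> (Rel G p)\<^sup>*" using Rel_G[OF pg that(1)] by (auto simp: C_def)
      moreover have "(b0, h b0) \<in> (Rel G p)\<^sup>*" using that(2) by (auto simp: C_def)
      ultimately show "y \<in> C" using \<open>y = h v\<close> by (auto simp: C_def)
    qed
    moreover have "C \<subseteq> h ` C"
    proof
      fix y assume "y \<in> C"
      have "(b0, h b0) \<in> (Rel G p)\<^sup>*" "(b0, y) \<in> (Rel G p)\<^sup>*" using that(2) \<open>y \<in> C\<close> by (auto simp: C_def)
      then have "(h b0, y) \<in> (Rel G p)\<^sup>*" using Rel_sym rtrancl_trans by metis
      then have "(inv h (h b0), inv h y) \<in> (Rel G p)\<^sup>*" using Rel_G[OF pg invG[OF that(1)]] by blast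
      moreover have "inv h (h b0) = b0" using bijG[OF that(1)] by (simp add: bij_is_inj)
      ultimately have "inv h y \<in> C" by (auto simp: C_def)
      moreover have "h (inv h y) = y" using bijG[OF that(1)] by (simp add: bij_is_surj surj_f_inv_f)
      ultimately show "y \<in> h ` C" by (metis image_eqI)
    qed
    ultimately show ?thesis using that by (auto simp: V_def)
  qed
  have Cinv: "g ` C = C" if "g \<in> V" for g using that by (auto simp: V_def)
  show ?thesis
  proof (rule ccontr)
    assume nw: "(b0, w) \<notin> (Rel G p)\<^sup>*"
    obtain gw where gw: "gw \<in> G" "gw b0 = w" using tr by (auto simp: transitive_group_def)
    have gwV: "gw \<notin> V"
    proof
      assume "gw \<in> V"
      then have "w \<in> C" using Cinv b0C gw(2) by (metis image_eqI)
      then show False using nw by (auto simp: C_def)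
    qed
    have sub: "subgroup_of V G"
    proof -
      have "inv g \<in> V" if "g \<in> V" for g
      proof -
        have "g \<in> G" "g ` C = C" using that by (auto simp: V_def)
        then have "inv g ` C = C" using bijG[OF \<open>g \<in> G\<close>]
          by (metis bij_is_inj image_inv_f_f)
        then show ?thesis using invG \<open>g \<in> G\<close> by (auto simp: V_def)
      qed
      moreover have "g \<circ> h \<in> V" if "g \<in> V" "h \<in> V" for g h
      proof -
        have "g \<in> G" "h \<in> G" "g ` C = C" "h ` C = C" using that by (auto simp: V_def)
        then have "(g \<circ> h) ` C = C" by (metis image_comp)
        then show ?thesis using compG \<open>g \<in> G\<close> \<open>h \<in> G\<close> by (auto simp: V_def)
      qed
      ultimately show ?thesis using idG by (auto simp: subgroup_of_def V_def)
    qed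
    have stabV: "pstab G {b0} \<subseteq> V"
    proof
      fix g assume "g \<in> pstab G {b0}"
      then have "g \<in> G" "g b0 = b0" by (auto simp: pstab_def)
      then show "g \<in> V" using inV b0C by auto
    qed
    have "open_subgroup V G" using sub stabV unfolding open_subgroup_def by blast
    moreover have "V \<noteq> G" using gwV gw(1) by blast
    ultimately obtain A where A: "finite A" "pstab G A \<subseteq> V" "finite (left_cosets V (pstab G A))"
      using wei unfolding weak_elim_imag_def by blast
    have Ane: "A \<noteq> {}"
    proof
      assume "A = {}"
      then have "pstab G A = G" by (auto simp: pstab_def)
      then show False using A(2) gwV gw(1) by blast
    qed
    have finO: "finite {h a | h. h \<in> V}" if "a \<in> A" for a
    proof -
      let ?H = "pstab G A"
      have "{h a | h. h \<in> V} \<subseteq> (\<lambda>K. (SOME k. k \<in> K) a) ` left_cosets V ?H"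
      proof
        fix y assume "y \<in> {h a | h. h \<in> V}"
        then obtain h where h: "h \<in> V" "y = h a" by auto
        define K where "K = (\<lambda>k. h \<circ> k) ` ?H"
        have KL: "K \<in> left_cosets V ?H" using h by (auto simp: K_def left_cosets_def)
        have "id \<in> ?H" using idG by (auto simp: pstab_def)
        then have "\<exists>k. k \<in> K" by (auto simp: K_def)
        then have "(SOME k. k \<in> K) \<in> K" by (rule someI_ex)
        then obtain k' where "k' \<in> ?H" "(SOME k. k \<in> K) = h \<circ> k'" by (auto simp: K_def)
        then have "(SOME k. k \<in> K) a = y" using that h by (auto simp: pstab_def)
        then show "y \<in> (\<lambda>K. (SOME k. k \<in> K) a) ` left_cosets V ?H" using KL by force
      qed
      then show ?thesis using A(3) finite_subset by blast
    qed
    from Ane obtain a where aA: "a \<in> A" by blast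
    show False
    proof (cases "a = b0")
      case False
      then have "infinite {g a | g. g \<in> pstab G {b0}}"
        using na unfolding no_algebraicity_def by auto
      moreover have "{g a | g. g \<in> pstab G {b0}} \<subseteq> {h a | h. h \<in> V}" using stabV by blast
      ultimately show False using finO[OF aA] finite_subset by blast
    next
      case True
      obtain g0 where g0: "g0 \<in> G" "g0 (snd p) = b0" using tr by (auto simp: transitive_group_def)
      have "(g0 (fst p), b0) \<in> tau G p" using tau_G[OF pg g0(1) tau_self[OF pg]] g0(2)
        by (metis prod.collapse)
      then have "infinite {d. (g0 (fst p), d) \<in> tau G p}" using succ_infinite[OF pg na np] by blast
      then obtain b1 where b1: "(g0 (fst p), b1) \<in> tau G p" "b1 \<noteq> b0"
      proof -
        have "{d. (g0 (fst p), d) \<in> tau G p} \<noteq> {b0}"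
          using \<open>infinite {d. (g0 (fst p), d) \<in> tau G p}\<close> by (metis finite.emptyI finite_insert)
        then show ?thesis using that \<open>(g0 (fst p), b0) \<in> tau G p\<close> by blast
      qed
      then have Rb: "(b0, b1) \<in> Rel G p" using \<open>(g0 (fst p), b0) \<in> tau G p\<close> by (auto simp: Rel_def)
      have "infinite {g b1 | g. g \<in> pstab G {b0}}"
        using na b1(2) unfolding no_algebraicity_def by auto
      moreover have "{g b1 | g. g \<in> pstab G {b0}} \<subseteq> {h b0 | h. h \<in> V}"
      proof
        fix y assume "y \<in> {g b1 | g. g \<in> pstab G {b0}}"
        then obtain g where g: "g \<in> G" "g b0 = b0" "y = g b1" by (auto simp: pstab_def)
        have "(g b0, g b1) \<in> (Rel G p)\<^sup>*" using Rel_G[OF pg g(1)] Rb by blast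
        then have yC: "y \<in> C" using g by (auto simp: C_def)
        obtain h where h: "h \<in> G" "h b0 = y" using tr by (auto simp: transitive_group_def)
        then have "h \<in> V" using inV yC by auto
        then show "y \<in> {h b0 | h. h \<in> V}" using h by auto
      qed
      ultimately show False using finO aA True finite_subset by blast
    qed
  qed
qed


lemma space_LO: "space LO_space = LO"
  by (simp add: LO_space_def space_measure_of_conv)

lemma gen_LO: "{x\<in>LO. (a, b) \<in> x} \<in> sets LO_space"
proof -
  have sub: "{{x\<in>LO. (a, b) \<in> x} | a b. True} \<subseteq> Pow LO" by auto
  show ?thesis unfolding LO_space_def sets_measure_of[OF sub]
    by (rule sigma_sets.Basic) auto
qed

lemma act_LO:
  assumes "bij g" "x \<in> LO" shows "act g x \<in> LO"
proof -
  have inj: "inj (inv g)" using assms(1) by (simp add: bij_imp_bij_inv bij_is_inj)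
  have lo: "irrefl x" "trans x" "\<And>a b. a \<noteq> b \<Longrightarrow> (a, b) \<in> x \<or> (b, a) \<in> x"
    using assms(2) by (auto simp: LO_def is_LO_def)
  have "irrefl (act g x)" using lo(1) by (auto simp: act_def irrefl_def)
  moreover have "trans (act g x)" using lo(2) unfolding act_def trans_def by blast
  moreover have "(a, b) \<in> act g x \<or> (b, a) \<in> act g x" if "a \<noteq> b" for a b
    using lo(3)[of "inv g a" "inv g b"] inj that by (auto simp: act_def inj_eq)
  ultimately show ?thesis by (auto simp: LO_def is_LO_def)
qed

lemma act_act: "bij g \<Longrightarrow> act g (act (inv g) x) = x"
  by (simp add: act_def bij_is_inj bij_is_surj surj_f_inv_f inv_inv_eq)

lemma tau_swap: "(u, c) \<in> tau G (b, a) \<longleftrightarrow> (c, u) \<in> tau G (a, b)"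
  by (auto simp: tau_def same_2type_def)

lemma tau_two: "tau G p \<in> two_types G"
  unfolding tau_def two_types_def by blast

lemma key:
  assumes pg: "perm_group G" and tr: "transitive_group G" and na: "no_algebraicity G"
    and wei: "weak_elim_imag G" and np: "a \<noteq> b"
    and x: "x \<in> LO"
    and R1: "\<forall>u v c. (u, c) \<in> tau G (a,b) \<longrightarrow> (v, c) \<in> tau G (a,b) \<longrightarrow> \<not> strictly_between x u c v"
    and R2: "\<forall>u v c. (c, u) \<in> tau G (a,b) \<longrightarrow> (c, v) \<in> tau G (a,b) \<longrightarrow> \<not> strictly_between x u c v"
    and ab: "(a, b) \<in> x"
  shows "\<forall>q. q \<in> tau G (a,b) \<longrightarrow> q \<in> x"
proof -
  let ?t = "tau G (a,b)"
  have lo: "irrefl x" "trans x" "\<And>a b. a \<noteq> b \<Longrightarrow> (a, b) \<in> x \<or> (b, a) \<in> x"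
    using x by (auto simp: LO_def is_LO_def)
  have neq: "\<And>c d. (c,d) \<in> ?t \<Longrightarrow> c \<noteq> d" using tau_neq[OF pg] np by fastforce
  have inE: "(c', d) \<in> x" if h1: "(c, d) \<in> ?t" and h2: "(c', d) \<in> ?t" and h3: "(c, d) \<in> x" for c c' d
  proof (rule ccontr)
    assume "(c', d) \<notin> x"
    then have "(d, c') \<in> x" using lo(3) neq[OF h2] by blast
    then have "strictly_between x c d c'" using h3 by (auto simp: strictly_between_def)
    then show False using R1 h1 h2 by blast
  qed
  have outE: "(c, d') \<in> x" if h1: "(c, d) \<in> ?t" and h2: "(c, d') \<in> ?t" and h3: "(c, d) \<in> x" for c d d'
  proof (rule ccontr)
    assume "(c, d') \<notin> x"
    then have "(d', c) \<in> x" using lo(3) neq[OF h2] by blast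
    then have "strictly_between x d c d'" using h3 by (auto simp: strictly_between_def)
    then show False using R2 h1 h2 by blast
  qed
  define P where "P d \<longleftrightarrow> (\<forall>c. (c, d) \<in> ?t \<longrightarrow> (c, d) \<in> x)" for d
  have Pb: "P b" unfolding P_def using inE tau_self[OF pg, of "(a,b)"] ab by auto
  have stepP: "P d'" if s1: "P d" and s2: "(d, d') \<in> Rel G (a,b)" for d d'
  proof -
    obtain c where c: "(c, d) \<in> ?t" "(c, d') \<in> ?t" using s2 by (auto simp: Rel_def)
    then have "(c, d') \<in> x" using outE s1 by (auto simp: P_def)
    then show ?thesis unfolding P_def using inE[OF c(2) _ \<open>(c, d') \<in> x\<close>] by blast
  qed
  have "P d" for d
  proof -
    have "(b, d) \<in> (Rel G (a,b))\<^sup>*" using universal[OF pg tr na wei, of "(a,b)"] np by simp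
    then show ?thesis
    proof (induction rule: rtrancl_induct)
      case base then show ?case by (rule Pb)
    next
      case (step y z) then show ?case using stepP by blast
    qed
  qed
  then show ?thesis by (auto simp: P_def)
qed


theorem mainTheorem16:
  fixes G :: "('a::countable \<Rightarrow> 'a) set"
    and \<mu> :: "('a \<times> 'a) set measure"
  assumes "closed_perm_group G"
    and "oligomorphic G"
    and "transitive_group G"
    and "no_algebraicity G"
    and "weak_elim_imag G"
    and "sets \<mu> = sets LO_space"
    and "prob_space \<mu>"
    and "invariant_measure G \<mu>"
    and "ergodic_measure G \<mu>"
    and "\<forall>\<tau>\<in>two_types G. respects_2type G \<mu> \<tau>"
  shows "\<exists>x\<in>LO. \<mu> = return LO_space x"
proof -
  note tr = assms(3) and na = assms(4) and wei = assms(5) and sets_eq = assms(6)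
    and ps = assms(7) and inv = assms(8) and erg = assms(9) and resp = assms(10)
  have pg: "perm_group G" using assms(1) by (simp add: closed_perm_group_def)
  have bijG: "\<And>g. g \<in> G \<Longrightarrow> bij g" and invG: "\<And>g. g \<in> G \<Longrightarrow> inv g \<in> G"
    using pg by (auto simp: perm_group_def)
  have spc: "space \<mu> = LO" using sets_eq_imp_space_eq[OF sets_eq] space_LO by simp
  have AELO: "AE x in \<mu>. x \<in> LO" using AE_space[of \<mu>] spc by simp
  have gen: "{x\<in>LO. (a, b) \<in> x} \<in> sets \<mu>" for a b using gen_LO sets_eq by simp
  have dich: "(AE x in \<mu>. (a, b) \<in> x) \<or> (AE x in \<mu>. (a, b) \<notin> x)" for a b
  proof (cases "a = b")
    case True
    have "AE x in \<mu>. (a, b) \<notin> x" using AELO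
      by (rule AE_mp) (auto simp: True LO_def is_LO_def irrefl_def)
    then show ?thesis by blast
  next
    case np: False
    let ?t = "tau G (a,b)"
    have r1: "respects_2type G \<mu> ?t" using resp tau_two by blast
    have r2: "respects_2type G \<mu> (tau G (b,a))" using resp tau_two by blast
    have AE1: "AE x in \<mu>. \<forall>u v c. (u, c) \<in> ?t \<longrightarrow> (v, c) \<in> ?t \<longrightarrow> \<not> strictly_between x u c v"
    proof -
      have "AE x in \<mu>. (u, c) \<in> ?t \<longrightarrow> (v, c) \<in> ?t \<longrightarrow> \<not> strictly_between x u c v" for u v c
        using r1 unfolding respects_2type_def by (intro AE_impI) auto
      then show ?thesis by (simp add: AE_all_countable)
    qed
    have AE2: "AE x in \<mu>. \<forall>u v c. (c, u) \<in> ?t \<longrightarrow> (c, v) \<in> ?t \<longrightarrow> \<not> strictly_between x u c v"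
    proof -
      have "AE x in \<mu>. (c, u) \<in> ?t \<longrightarrow> (c, v) \<in> ?t \<longrightarrow> \<not> strictly_between x u c v" for u v c
        using r2 unfolding respects_2type_def by (intro AE_impI) (simp add: tau_swap)
      then show ?thesis by (simp add: AE_all_countable)
    qed
    define B where "B = {x\<in>LO. \<forall>q. q \<in> ?t \<longrightarrow> q \<in> x}"
    have Bs: "B \<in> sets \<mu>"
    proof -
      have "{x\<in>space \<mu>. \<forall>q. q \<in> ?t \<longrightarrow> q \<in> x} \<in> sets \<mu>"
      proof (rule sets.sets_Collect_countable_All)
        fix q :: "'a \<times> 'a"
        show "{x\<in>space \<mu>. q \<in> ?t \<longrightarrow> q \<in> x} \<in> sets \<mu>"
        proof (cases "q \<in> ?t")
          case True
          then show ?thesis using gen[of "fst q" "snd q"] spc by simp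
        next
          case False
          then show ?thesis by simp
        qed
      qed
      then show ?thesis using spc by (simp add: B_def)
    qed
    have actB: "act h x \<in> B" if "h \<in> G" "x \<in> B" for h x
    proof -
      have "act h x \<in> LO" using act_LO bijG that by (auto simp: B_def)
      moreover have "q \<in> act h x" if q: "q \<in> ?t" for q
      proof -
        obtain c d where cd: "q = (c, d)" by (cases q)
        have "(inv h c, inv h d) \<in> ?t" using tau_G[OF pg invG[OF \<open>h \<in> G\<close>]] q cd by simp
        then show ?thesis using \<open>x \<in> B\<close> cd by (auto simp: B_def act_def)
      qed
      ultimately show ?thesis by (auto simp: B_def)
    qed
    have Binv: "act g ` B = B" if "g \<in> G" for g
    proof
      show "act g ` B \<subseteq> B" using actB that by auto
      show "B \<subseteq> act g ` B"
      proof
        fix x assume "x \<in> B"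
        then have "act (inv g) x \<in> B" using actB invG that by blast
        moreover have "act g (act (inv g) x) = x" using act_act bijG that by blast
        ultimately show "x \<in> act g ` B" by (metis image_eqI)
      qed
    qed
    have "emeasure \<mu> B = 0 \<or> emeasure \<mu> B = 1" using erg Bs Binv unfolding ergodic_measure_def by blast
    then show ?thesis
    proof
      assume "emeasure \<mu> B = 0"
      then have "AE x in \<mu>. x \<notin> B" using Bs by (intro AE_not_in) auto
      then have "AE x in \<mu>. (a, b) \<notin> x" using AE1 AE2 AELO
      proof eventually_elim
        case (elim x)
        show ?case
        proof
          assume "(a, b) \<in> x"
          then have "\<forall>q. q \<in> ?t \<longrightarrow> q \<in> x"
            using key[OF pg tr na wei np elim(4) elim(2) elim(3)] by blast
          then show False using elim(1,4) by (auto simp: B_def)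
        qed
      qed
      then show ?thesis by blast
    next
      assume "emeasure \<mu> B = 1"
      then have "AE x in \<mu>. x \<in> B"
        using prob_space.AE_in_set_eq_1[OF ps] Bs by (simp add: measure_def)
      then have "AE x in \<mu>. (a, b) \<in> x"
        by (rule AE_mp) (auto simp: B_def intro: tau_self[OF pg, of "(a,b)", simplified])
      then show ?thesis by blast
    qed
  qed
  define x0 where "x0 = {q. AE x in \<mu>. q \<in> x}"
  have "AE x in \<mu>. q \<in> x \<longleftrightarrow> q \<in> x0" for q
  proof (cases "AE x in \<mu>. q \<in> x")
    case True then show ?thesis by (auto simp: x0_def)
  next
    case False
    then have "AE x in \<mu>. q \<notin> x" using dich[of "fst q" "snd q"] by simp
    then show ?thesis using False by (auto simp: x0_def)
  qed
  then have "AE x in \<mu>. \<forall>q. q \<in> x \<longleftrightarrow> q \<in> x0" by (simp add: AE_all_countable)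
  then have AEx0: "AE x in \<mu>. x = x0" by (rule AE_mp) (auto intro!: AE_I2)
  have x0LO: "x0 \<in> LO"
  proof (rule ccontr)
    assume "x0 \<notin> LO"
    have "AE x in \<mu>. False" using AEx0 AELO by eventually_elim (use \<open>x0 \<notin> LO\<close> in auto)
    then show False using prob_space.AE_False[OF ps] by simp
  qed
  have "\<mu> = return LO_space x0"
  proof (rule measure_eqI)
    show "sets \<mu> = sets (return LO_space x0)" using sets_eq by simp
    fix A assume A: "A \<in> sets \<mu>"
    have rA: "emeasure (return LO_space x0) A = indicator A x0"
      using A sets_eq by (simp add: emeasure_return)
    show "emeasure \<mu> A = emeasure (return LO_space x0) A"
    proof (cases "x0 \<in> A")
      case True
      have "emeasure \<mu> A = emeasure \<mu> (space \<mu>)"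
        using A by (intro emeasure_eq_AE) (use AEx0 AE_space[of \<mu>] True in \<open>auto elim: AE_mp\<close>)
      then show ?thesis using rA True prob_space.emeasure_space_1[OF ps] by simp
    next
      case False
      have "emeasure \<mu> A = emeasure \<mu> {}"
        using A by (intro emeasure_eq_AE) (use AEx0 False in \<open>auto elim: AE_mp\<close>)
      then show ?thesis using rA False by simp
    qed
  qed
  then show ?thesis using x0LO by blast
qed

end
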